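(* For $\mathfrak g=A_2$ and every $n\in\mathbb N$, $S_{n\lambda_1,2}=\mathcal L_{n\lambda_1,2}\cap P_{2n\lambda_1}$.
   Context: $A_2=\mathfrak{sl}_3$ with simple roots $\alpha_1,\alpha_2$, fundamental weights $\lambda_1,\lambda_2$, weight lattice $\Lambda$, root lattice $\Lambda_r$, dominant weights $\Lambda^+$, Weyl group $W$, $\rho=\lambda_1+\lambda_2$. $\Pi_\lambda$ is the set of weights of $V_\lambda$; $S_{\lambda,a}=[\bigcup_{\sigma\in W}(\sigma(\rho)-\rho+a\Pi_\lambda)]\cap\Lambda^+$; $\mathcal L_{\lambda,a}=\bigcup_{\sigma\in W}(a\lambda+\sigma(\rho)-\rho+a\Lambda_r)$; $P_\lambda$ is the convex hull of $\Pi_\lambda\cap\Lambda^+$ (so $\mathcal L_{\lambda,a}\cap P_{a\lambda}$ is a set of weights). *)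

theory Defs
  imports "HOL-Analysis.Analysis"
begin

text \<open>Weights of A2 = sl3 in the basis of fundamental weights:
  the pair (a,b) stands for a*lambda1 + b*lambda2.\<close>

type_synonym wt = "int \<times> int"

definition wadd :: "wt \<Rightarrow> wt \<Rightarrow> wt" where
  "wadd x y = (fst x + fst y, snd x + snd y)"

definition wsub :: "wt \<Rightarrow> wt \<Rightarrow> wt" where
  "wsub x y = (fst x - fst y, snd x - snd y)"

definition wsc :: "int \<Rightarrow> wt \<Rightarrow> wt" where
  "wsc k x = (k * fst x, k * snd x)"

definition lambda1 :: wt where "lambda1 = (1, 0)"
definition lambda2 :: wt where "lambda2 = (0, 1)"
definition rho :: wt where "rho = wadd lambda1 lambda2"

text \<open>Simple roots: alpha1 = 2 lambda1 - lambda2, alpha2 = -lambda1 + 2 lambda2 (Cartan matrix).\<close>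
definition alpha1 :: wt where "alpha1 = (2, -1)"
definition alpha2 :: wt where "alpha2 = (-1, 2)"

text \<open>Simple reflections s_i(mu) = mu - <mu, alpha_i^vee> alpha_i.\<close>
definition s1 :: "wt \<Rightarrow> wt" where "s1 mu = wsub mu (wsc (fst mu) alpha1)"
definition s2 :: "wt \<Rightarrow> wt" where "s2 mu = wsub mu (wsc (snd mu) alpha2)"

inductive_set weyl :: "(wt \<Rightarrow> wt) set" where
  weyl_id: "id \<in> weyl"
| weyl_s1: "w \<in> weyl \<Longrightarrow> s1 \<circ> w \<in> weyl"
| weyl_s2: "w \<in> weyl \<Longrightarrow> s2 \<circ> w \<in> weyl"

definition root_lattice :: "wt set" where
  "root_lattice = {wadd (wsc m alpha1) (wsc k alpha2) | m k. True}"

definition pos_root_cone :: "wt set" where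
  "pos_root_cone = {wadd (wsc (int m) alpha1) (wsc (int k) alpha2) | m k. True}"

definition dominant :: "wt set" where
  "dominant = {mu. fst mu \<ge> 0 \<and> snd mu \<ge> 0}"

text \<open>Pi lambda: the set of weights of the irreducible module V_lambda (lambda dominant),
  via the standard characterization: mu is a weight iff mu is congruent to lambda
  modulo the root lattice and every W-conjugate of mu lies below lambda in the
  dominance order.\<close>
definition Pi_wt :: "wt \<Rightarrow> wt set" where
  "Pi_wt lam = {mu. wsub mu lam \<in> root_lattice \<and>
                    (\<forall>\<sigma>\<in>weyl. wsub lam (\<sigma> mu) \<in> pos_root_cone)}"

definition emb :: "wt \<Rightarrow> real \<times> real" where
  "emb mu = (real_of_int (fst mu), real_of_int (snd mu))"

definition P_hull :: "wt \<Rightarrow> (real \<times> real) set" where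
  "P_hull lam = convex hull (emb ` (Pi_wt lam \<inter> dominant))"

definition S_set :: "wt \<Rightarrow> int \<Rightarrow> wt set" where
  "S_set lam a = (\<Union>\<sigma>\<in>weyl. {wadd (wsub (\<sigma> rho) rho) (wsc a mu) | mu. mu \<in> Pi_wt lam})
                 \<inter> dominant"

definition L_set :: "wt \<Rightarrow> int \<Rightarrow> wt set" where
  "L_set lam a = (\<Union>\<sigma>\<in>weyl. {wadd (wadd (wsc a lam) (wsub (\<sigma> rho) rho)) (wsc a nu) | nu. nu \<in> root_lattice})"

end

theory Submission
  imports Defs
begin

lemma s1_ex: "s1 (a,b) = (-a, a+b)"
  by (simp add: s1_def wsub_def wsc_def alpha1_def)

lemma s2_ex: "s2 (a,b) = (a+b, -b)"
  by (simp add: s2_def wsub_def wsc_def alpha2_def)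

lemma s11: "s1 \<circ> s1 = id"
  by (simp add: fun_eq_iff s1_def wsub_def wsc_def alpha1_def)

lemma s11': "s1 \<circ> (s1 \<circ> f) = f"
  by (simp add: fun_eq_iff s1_def wsub_def wsc_def alpha1_def)

lemma s22: "s2 \<circ> s2 = id"
  by (simp add: fun_eq_iff s2_def wsub_def wsc_def alpha2_def)

lemma s22': "s2 \<circ> (s2 \<circ> f) = f"
  by (simp add: fun_eq_iff s2_def wsub_def wsc_def alpha2_def)

lemma braid: "s2 \<circ> (s1 \<circ> s2) = s1 \<circ> (s2 \<circ> s1)"
  by (simp add: fun_eq_iff s1_def s2_def wsub_def wsc_def alpha1_def alpha2_def)

lemma s11p: "s1 (s1 x) = x"
  by (cases x) (simp add: s1_ex)

lemma s22p: "s2 (s2 x) = x"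
  by (cases x) (simp add: s2_ex)

lemma braidp: "s2 (s1 (s2 x)) = s1 (s2 (s1 x))"
  by (cases x) (simp add: s1_ex s2_ex)

lemma braid': "s2 \<circ> (s1 \<circ> (s2 \<circ> f)) = s1 \<circ> (s2 \<circ> (s1 \<circ> f))"
  by (simp add: fun_eq_iff s1_def s2_def wsub_def wsc_def alpha1_def alpha2_def)

lemma weyl_cases:
  assumes "\<sigma> \<in> weyl"
  shows "\<sigma> = id \<or> \<sigma> = s1 \<or> \<sigma> = s2 \<or> \<sigma> = s1 \<circ> s2 \<or> \<sigma> = s2 \<circ> s1 \<or> \<sigma> = s1 \<circ> (s2 \<circ> s1)"
  using assms
proof (induction rule: weyl.induct)
  case weyl_id
  then show ?case by simp
next
  case (weyl_s1 w)
  then show ?case by (elim disjE) (simp_all add: s11p s22p braidp)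
next
  case (weyl_s2 w)
  then show ?case by (elim disjE) (simp_all add: s11p s22p braidp)
qed

lemma weyl_cases':
  assumes "\<sigma> \<in> weyl"
  shows "\<sigma> = id \<or> \<sigma> = s1 \<or> \<sigma> = s2 \<or> \<sigma> = (\<lambda>(a,b). (-a-b, a)) \<or> \<sigma> = (\<lambda>(a,b). (b, -a-b))
    \<or> \<sigma> = (\<lambda>(a,b). (-b, -a))"
proof -
  have 1: "s1 \<circ> s2 = (\<lambda>(a,b). (-a-b, a))"
    by (simp add: fun_eq_iff s1_ex s2_ex split: prod.splits)
  have 2: "s2 \<circ> s1 = (\<lambda>(a,b). (b, -a-b))"
    by (simp add: fun_eq_iff s1_ex s2_ex split: prod.splits)
  have 3: "s1 \<circ> (s2 \<circ> s1) = (\<lambda>(a,b). (-b, -a))"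
    by (simp add: fun_eq_iff s1_ex s2_ex split: prod.splits)
  show ?thesis using weyl_cases[OF assms] 1 2 3 by metis
qed

lemma cone_iff: "(x,y) \<in> pos_root_cone \<longleftrightarrow> 2*x+y \<ge> 0 \<and> x+2*y \<ge> 0 \<and> 3 dvd (x+2*y)"
proof
  assume "(x,y) \<in> pos_root_cone"
  then obtain m k :: nat where "(x,y) = wadd (wsc (int m) alpha1) (wsc (int k) alpha2)"
    unfolding pos_root_cone_def by blast
  then have "x = 2*int m - int k" "y = 2* int k - int m"
    by (simp_all add: wadd_def wsc_def alpha1_def alpha2_def)
  then show "2*x+y \<ge> 0 \<and> x+2*y \<ge> 0 \<and> 3 dvd (x+2*y)" by presburger
next
  assume h: "2*x+y \<ge> 0 \<and> x+2*y \<ge> 0 \<and> 3 dvd (x+2*y)"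
  then have h2: "3 dvd (2*x+y)" by presburger
  define m where "m = nat ((2*x+y) div 3)"
  define k where "k = nat ((x+2*y) div 3)"
  have "int m = (2*x+y) div 3" "int k = (x+2*y) div 3" using h unfolding m_def k_def by auto
  then have "(x,y) = wadd (wsc (int m) alpha1) (wsc (int k) alpha2)"
    using h h2 by (auto simp: wadd_def wsc_def alpha1_def alpha2_def)
  then show "(x,y) \<in> pos_root_cone" unfolding pos_root_cone_def by blast
qed

lemma root_iff: "(x,y) \<in> root_lattice \<longleftrightarrow> 3 dvd (x+2*y)"
proof
  assume "(x,y) \<in> root_lattice"
  then obtain m k where "(x,y) = wadd (wsc m alpha1) (wsc k alpha2)"
    unfolding root_lattice_def by blast
  then have "x = 2*m - k" "y = 2*k - m"
    by (simp_all add: wadd_def wsc_def alpha1_def alpha2_def)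
  then show "3 dvd (x+2*y)" by presburger
next
  assume h: "3 dvd (x+2*y)"
  then have h2: "3 dvd (2*x+y)" by presburger
  define m where "m = (2*x+y) div 3"
  define k where "k = (x+2*y) div 3"
  have "(x,y) = wadd (wsc m alpha1) (wsc k alpha2)"
    using h h2 unfolding m_def k_def by (auto simp: wadd_def wsc_def alpha1_def alpha2_def)
  then show "(x,y) \<in> root_lattice" unfolding root_lattice_def by blast
qed

lemma Pi_dom:
  assumes "0 \<le> x" "0 \<le> y" "x+2*y \<le> N" "3 dvd (x+2*y-N)"
  shows "(x,y) \<in> Pi_wt (N,0)"
  unfolding Pi_wt_def
proof (simp add: wsub_def root_iff, intro conjI ballI)
  show "3 dvd (x - N + 2*y)" using assms(4) by presburger
  fix \<sigma> :: "wt \<Rightarrow> wt" assume "\<sigma> \<in> weyl"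
  then show "(N - fst (\<sigma> (x, y)), - snd (\<sigma> (x, y))) \<in> pos_root_cone"
    using weyl_cases'[OF \<open>\<sigma> \<in> weyl\<close>] assms
    by (elim disjE) (simp_all add: s1_ex s2_ex cone_iff, presburger+)
qed

lemma Pi_le:
  assumes "(x,y) \<in> Pi_wt (N,0)"
  shows "x+2*y \<le> N \<and> 3 dvd (x+2*y-N)"
proof -
  have "wsub (N,0) (id (x,y)) \<in> pos_root_cone" "wsub (x,y) (N,0) \<in> root_lattice"
    using assms weyl_id unfolding Pi_wt_def by auto
  then show ?thesis by (simp add: wsub_def cone_iff root_iff, presburger)
qed

lemma hull_sub:
  assumes "emb (x,y) \<in> P_hull (N,0)"
  shows "0 \<le> x \<and> 0 \<le> y \<and> x+2*y \<le> N"
proof -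
  define C where "C = {p::real\<times>real. inner (-1,0) p \<le> 0} \<inter> {p. inner (0,-1) p \<le> 0}
     \<inter> {p. inner (1,2) p \<le> real_of_int N}"
  have cC: "convex C" unfolding C_def
    by (intro convex_Int convex_halfspace_le)
  have "emb ` (Pi_wt (N,0) \<inter> dominant) \<subseteq> C"
  proof
    fix p assume "p \<in> emb ` (Pi_wt (N,0) \<inter> dominant)"
    then obtain a b where ab: "(a,b) \<in> Pi_wt (N,0)" "(a,b) \<in> dominant" "p = emb (a,b)"
      by auto
    from Pi_le[OF ab(1)] ab(2) have "0 \<le> a" "0 \<le> b" "a + 2*b \<le> N"
      by (auto simp: dominant_def)
    then have "real_of_int a + 2 * real_of_int b \<le> real_of_int N" by linarith
    then show "p \<in> C" using \<open>0 \<le> a\<close> \<open>0 \<le> b\<close> ab(3) by (simp add: C_def emb_def inner_Pair)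
  qed
  then have "P_hull (N,0) \<subseteq> C" unfolding P_hull_def using cC by (rule hull_minimal)
  then have "emb (x,y) \<in> C" using assms by auto
  then have "0 \<le> real_of_int x" "0 \<le> real_of_int y" "real_of_int x + 2 * real_of_int y \<le> real_of_int N"
    by (auto simp: C_def emb_def inner_Pair)
  then show ?thesis by linarith
qed

lemma rho_cases:
  assumes "\<sigma> \<in> weyl"
  shows "wsub (\<sigma> rho) rho \<in> {(0,0),(-2,1),(1,-2),(-3,0),(0,-3),(-2,-2)}"
  using weyl_cases'[OF assms]
  by (elim disjE) (simp_all add: rho_def wadd_def wsub_def lambda1_def lambda2_def s1_ex s2_ex)

lemma s1_weyl: "s1 \<in> weyl"
  using weyl_s1[OF weyl_id] by simp

lemma s2_weyl: "s2 \<in> weyl"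
  using weyl_s2[OF weyl_id] by simp

lemma s1_rho: "wsub (s1 rho) rho = (-2,1)"
  by (simp add: rho_def wadd_def wsub_def lambda1_def lambda2_def s1_ex)

lemma s2_rho: "wsub (s2 rho) rho = (1,-2)"
  by (simp add: rho_def wadd_def wsub_def lambda1_def lambda2_def s2_ex)

lemma id_rho: "wsub (id rho) rho = (0,0)"
  by (simp add: rho_def wadd_def wsub_def lambda1_def lambda2_def)

theorem mainTheorem12:
  fixes n :: nat
  shows "S_set (wsc (int n) lambda1) 2 =
         L_set (wsc (int n) lambda1) 2 \<inter> {mu. emb mu \<in> P_hull (wsc (2 * int n) lambda1)}"
proof (rule set_eqI, rule iffI)
  have lam: "wsc (int n) lambda1 = (int n, 0)" "wsc (2 * int n) lambda1 = (2 * int n, 0)"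
    by (simp_all add: wsc_def lambda1_def)
  {
  fix mu assume "mu \<in> S_set (wsc (int n) lambda1) 2"
  then obtain \<sigma> m where sm: "\<sigma> \<in> weyl" "m \<in> Pi_wt (int n, 0)"
     "mu = wadd (wsub (\<sigma> rho) rho) (wsc 2 m)" "mu \<in> dominant"
    unfolding S_set_def lam by blast
  obtain x y where xy: "m = (x,y)" by (cases m)
  obtain c1 c2 where c: "wsub (\<sigma> rho) rho = (c1,c2)" by (cases "wsub (\<sigma> rho) rho")
  have cc: "(c1,c2) \<in> {(0,0),(-2,1),(1,-2),(-3,0),(0,-3),(-2,-2)}"
    using rho_cases[OF sm(1)] c by simp
  have le: "x+2*y \<le> int n" "3 dvd (x+2*y-int n)" using Pi_le sm(2) xy by auto
  have mu: "mu = (c1 + 2*x, c2 + 2*y)" using sm(3) c xy by (simp add: wadd_def wsc_def)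
  have "wsub m (int n, 0) \<in> root_lattice" using sm(2) unfolding Pi_wt_def by auto
  then have "mu = wadd (wadd (wsc 2 (int n, 0)) (wsub (\<sigma> rho) rho)) (wsc 2 (wsub m (int n, 0)))
     \<and> wsub m (int n, 0) \<in> root_lattice"
    using mu c xy by (simp add: wadd_def wsc_def wsub_def)
  then have "mu \<in> L_set (wsc (int n) lambda1) 2"
    unfolding L_set_def lam using sm(1) by blast
  moreover have "mu \<in> Pi_wt (2 * int n, 0)"
    unfolding mu
  proof (rule Pi_dom)
    show "0 \<le> c1 + 2 * x" "0 \<le> c2 + 2 * y" using sm(4) mu by (auto simp: dominant_def)
    show "c1 + 2 * x + 2 * (c2 + 2 * y) \<le> 2 * int n" using cc le by auto
    show "3 dvd (c1 + 2 * x + 2 * (c2 + 2 * y) - 2 * int n)" using cc le by (auto, presburger+)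
  qed
  then have "emb mu \<in> P_hull (wsc (2 * int n) lambda1)"
    unfolding lam P_hull_def using sm(4) by (intro hull_inc) auto
  ultimately show "mu \<in> L_set (wsc (int n) lambda1) 2 \<inter> {mu. emb mu \<in> P_hull (wsc (2 * int n) lambda1)}"
    by simp
  }
  fix mu assume "mu \<in> L_set (wsc (int n) lambda1) 2 \<inter> {mu. emb mu \<in> P_hull (wsc (2 * int n) lambda1)}"
  then obtain \<sigma> \<nu> where sn: "\<sigma> \<in> weyl" "\<nu> \<in> root_lattice"
    "mu = wadd (wadd (wsc 2 (int n, 0)) (wsub (\<sigma> rho) rho)) (wsc 2 \<nu>)"
    "emb mu \<in> P_hull (2 * int n, 0)"
    unfolding L_set_def lam by blast
  obtain a b where ab: "mu = (a,b)" by (cases mu)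
  obtain p q where pq: "\<nu> = (p,q)" by (cases \<nu>)
  obtain c1 c2 where c: "wsub (\<sigma> rho) rho = (c1,c2)" by (cases "wsub (\<sigma> rho) rho")
  have cc: "(c1,c2) \<in> {(0,0),(-2,1),(1,-2),(-3,0),(0,-3),(-2,-2)}"
    using rho_cases[OF sn(1)] c by simp
  have pq3: "3 dvd (p + 2*q)" using sn(2) pq root_iff by simp
  have abeq: "a = 2 * int n + c1 + 2*p" "b = c2 + 2*q"
    using sn(3) ab pq c by (simp_all add: wadd_def wsc_def)
  have hb: "0 \<le> a" "0 \<le> b" "a + 2*b \<le> 2 * int n" using hull_sub sn(4) ab by auto
  have par: "\<not> (odd a \<and> odd b)" "3 dvd (a + 2*b - 2 * int n)"
    using cc abeq pq3 by (auto, presburger+)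
  have S: "mu \<in> S_set (wsc (int n) lambda1) 2" if "\<tau> \<in> weyl" "wsub (\<tau> rho) rho = (d1,d2)"
    "(x,y) \<in> Pi_wt (int n, 0)" "a = d1 + 2*x" "b = d2 + 2*y" for \<tau> d1 d2 x y
  proof -
    have "mu = wadd (wsub (\<tau> rho) rho) (wsc 2 (x,y))"
      using that ab by (simp add: wadd_def wsc_def)
    moreover have "mu \<in> dominant" using ab hb by (simp add: dominant_def)
    ultimately show ?thesis unfolding S_set_def lam using that(1,3) by blast
  qed
  show "mu \<in> S_set (wsc (int n) lambda1) 2"
  proof (cases "even a")
    case True
    then obtain a' where a': "a = 2*a'" by (auto elim!: evenE)
    show ?thesis
    proof (cases "even b")
      case True
      then obtain b' where b': "b = 2*b'" by (auto elim!: evenE)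
      show ?thesis
      proof (rule S[OF weyl_id id_rho])
        show "(a', b') \<in> Pi_wt (int n, 0)"
          by (rule Pi_dom) (use a' b' hb par in presburger)+
      qed (use a' b' in auto)
    next
      case False
      then obtain b' where b': "b = 2*b'+1" by (auto elim!: oddE)
      show ?thesis
      proof (rule S[OF s1_weyl s1_rho])
        show "(a'+1, b') \<in> Pi_wt (int n, 0)"
          by (rule Pi_dom) (use a' b' hb par in presburger)+
      qed (use a' b' in auto)
    qed
  next
    case False
    then obtain a' where a': "a = 2*a'+1" by (auto elim!: oddE)
    with par obtain b' where b': "b = 2*b'" by (auto elim!: evenE)
    show ?thesis
    proof (rule S[OF s2_weyl s2_rho])
      show "(a', b'+1) \<in> Pi_wt (int n, 0)"
        by (rule Pi_dom) (use a' b' hb par in presburger)+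
    qed (use a' b' in auto)
  qed
qed

end
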